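(* In any generalized functional theory $(V,\mathcal H,\iota,W)$, the set of pure-state $v$-representable densities which are not uniquely $v$-representable has (Lebesgue) measure zero in the affine space $\mathrm{aff}(\iota^*(\mathcal P))$.
   Context: A generalized functional theory is a tuple $(V,\mathcal H,\iota,W)$ with $V$ a finite-dimensional real vector space, $\mathcal H$ a finite-dimensional complex Hilbert space, $\iota:V\to i\mathfrak u(\mathcal H)$ a linear map into the Hermitian operators, and $W$ Hermitian. Density operators are regarded as elements of $(i\mathfrak u(\mathcal H))^*$ via the trace pairing; $\iota^*$ is the dual map; $\mathcal P$ is the set of pure states. For $v\in V$, $\mathbf G_p(v)$ is the set of pure ground states of $\iota(v)+W$. A density $\rho\in V^*$ is pure-state $v$-representable if $\rho\in\iota^*(\mathbf G_p(v))$ for some $v$; it is uniquely $v$-representable if moreover any $v'$ with $\rho\in\iota^*(\mathbf G_p(v'))$ satisfies $\iota(v')-\iota(v)\propto\mathbb 1$. *)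

theory Defs
  imports "HOL-Analysis.Analysis"
begin

text \<open>Hilbert space H = complex^'h ('h a finite index type); operators on H are
  matrices complex^'h^'h. V is a finite-dimensional real inner product space 'v;
  its dual V* is identified with 'v via the inner product (Riesz).\<close>

definition hermitian :: "complex^'h^'h \<Rightarrow> bool" where
  "hermitian A \<longleftrightarrow> (\<forall>i j. A $ i $ j = cnj (A $ j $ i))"

definition unit_vec :: "complex^'h \<Rightarrow> bool" where
  "unit_vec \<psi> \<longleftrightarrow> (\<Sum>i\<in>UNIV. (cmod (\<psi> $ i))^2) = 1"

definition ket_bra :: "complex^'h \<Rightarrow> complex^'h^'h" where
  "ket_bra \<psi> = (\<chi> i j. \<psi> $ i * cnj (\<psi> $ j))"

definition pure_states :: "(complex^'h^'h) set" where
  "pure_states = {ket_bra \<psi> | \<psi>. unit_vec \<psi>}"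

definition energy :: "complex^'h^'h \<Rightarrow> complex^'h^'h \<Rightarrow> real" where
  "energy \<Gamma> Hm = Re (trace (\<Gamma> ** Hm))"

definition pure_ground_states :: "complex^'h^'h \<Rightarrow> (complex^'h^'h) set" where
  "pure_ground_states Hm =
     {\<Gamma> \<in> pure_states. \<forall>\<Gamma>'\<in>pure_states. energy \<Gamma> Hm \<le> energy \<Gamma>' Hm}"

definition Gp :: "('v \<Rightarrow> complex^'h^'h) \<Rightarrow> complex^'h^'h \<Rightarrow> 'v \<Rightarrow> (complex^'h^'h) set" where
  "Gp \<iota> W v = pure_ground_states (\<iota> v + W)"

text \<open>The dual map iota^*: a density operator Gamma is sent to the functional
  v |-> tr(Gamma iota(v)) on V, represented (via the inner product) as a vector of 'v.\<close>
definition iota_star :: "('v::euclidean_space \<Rightarrow> complex^'h^'h) \<Rightarrow> complex^'h^'h \<Rightarrow> 'v" where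
  "iota_star \<iota> \<Gamma> = (\<Sum>b\<in>Basis. Re (trace (\<Gamma> ** \<iota> b)) *\<^sub>R b)"

definition gen_functional_theory :: "('v::euclidean_space \<Rightarrow> complex^'h^'h) \<Rightarrow> complex^'h^'h \<Rightarrow> bool" where
  "gen_functional_theory \<iota> W \<longleftrightarrow> linear \<iota> \<and> (\<forall>v. hermitian (\<iota> v)) \<and> hermitian W"

definition pure_v_rep :: "('v::euclidean_space \<Rightarrow> complex^'h^'h) \<Rightarrow> complex^'h^'h \<Rightarrow> 'v \<Rightarrow> bool" where
  "pure_v_rep \<iota> W \<rho> \<longleftrightarrow> (\<exists>v. \<rho> \<in> iota_star \<iota> ` Gp \<iota> W v)"

definition uniquely_v_rep :: "('v::euclidean_space \<Rightarrow> complex^'h^'h) \<Rightarrow> complex^'h^'h \<Rightarrow> 'v \<Rightarrow> bool" where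
  "uniquely_v_rep \<iota> W \<rho> \<longleftrightarrow> (\<exists>v. \<rho> \<in> iota_star \<iota> ` Gp \<iota> W v \<and>
      (\<forall>v'. \<rho> \<in> iota_star \<iota> ` Gp \<iota> W v' \<longrightarrow> (\<exists>c. \<iota> v' - \<iota> v = mat c)))"

text \<open>S has Lebesgue measure zero inside the affine subspace A of 'v: S is contained in A
  and the thickening of S by the orthogonal complement of the direction space of A
  is a Lebesgue null set of 'v (Fubini: Lebesgue measure on 'v is the product of the
  Lebesgue measures on the direction of A and on its orthogonal complement).\<close>
definition aff_null :: "'v::euclidean_space set \<Rightarrow> 'v set \<Rightarrow> bool" where
  "aff_null A S \<longleftrightarrow> S \<subseteq> A \<and>
     {x + y | x y. x \<in> S \<and> y \<in> orthogonal_comp {a - b | a b. a \<in> A \<and> b \<in> A}}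
       \<in> null_sets lebesgue"

end

theory Submission
  imports Defs
begin

lemma lin_tr: "linear (\<lambda>M::complex^'h^'h. Re (trace (G ** M)))"
  by (rule linearI) (simp_all add: trace_def matrix_matrix_mult_def sum.distrib distrib_left
       sum_distrib_left vector_scaleR_component algebra_simps)

lemma iota_star_inner:
  fixes \<iota> :: "'v::euclidean_space \<Rightarrow> complex^'h^'h"
  assumes "linear \<iota>"
  shows "iota_star \<iota> G \<bullet> u = Re (trace (G ** \<iota> u))"
proof -
  let ?f = "\<lambda>u. Re (trace (G ** \<iota> u))"
  have lf: "linear ?f" using linear_compose[OF assms lin_tr] by (simp add: o_def)
  have "?f u = ?f (\<Sum>b\<in>Basis. (u \<bullet> b) *\<^sub>R b)" by (simp add: euclidean_representation)
  also have "\<dots> = (\<Sum>b\<in>Basis. (u \<bullet> b) * ?f b)"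
    by (simp add: linear_sum[OF lf] linear_scale[OF lf])
  finally show ?thesis
    by (simp add: iota_star_def inner_sum_right inner_commute mult.commute)
qed

lemma energy_split:
  fixes \<iota> :: "'v::euclidean_space \<Rightarrow> complex^'h^'h"
  assumes "linear \<iota>"
  shows "energy G (\<iota> v + W) = iota_star \<iota> G \<bullet> v + energy G W"
  using linear_add[OF lin_tr, of G "\<iota> v" W]
  by (simp add: energy_def iota_star_inner[OF assms])

lemma sum2:
  assumes "i \<noteq> j" "\<And>k. h k 0 = 0"
  shows "(\<Sum>k\<in>(UNIV::'h::finite set). h k (if k = i then a else if k = j then b else 0)) = h i a + h j b"
proof -
  have "\<And>k. h k (if k = i then a else if k = j then b else 0) = (if k = i then h i a else 0) + (if k = j then h j b else 0)"
    using assms by auto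
  then show ?thesis by (simp add: sum.distrib)
qed

lemma sum1:
  assumes "\<And>k. h k 0 = 0"
  shows "(\<Sum>k\<in>(UNIV::'h::finite set). h k (if k = i then a else 0)) = h i a"
proof -
  have "\<And>k. h k (if k = i then a else 0) = (if k = i then h i a else 0)"
    using assms by auto
  then show ?thesis by simp
qed

lemma tr_ket: "trace (ket_bra \<psi> ** M) = (\<Sum>i\<in>UNIV. \<psi>$i * (\<Sum>k\<in>UNIV. cnj (\<psi>$k) * M$k$i))"
  by (simp add: trace_def matrix_matrix_mult_def ket_bra_def sum_distrib_left mult.assoc)

lemma tr2:
  fixes M :: "complex^'h^'h"
  assumes ij: "i \<noteq> j"
  shows "trace (ket_bra (\<chi> k. if k = i then a else if k = j then b else 0) ** M)
     = a*cnj a*M$i$i + a*cnj b*M$j$i + b*cnj a*M$i$j + b*cnj b*M$j$j"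
proof -
  have e: "(\<Sum>k\<in>UNIV. cnj (if k = i then a else if k = j then b else 0) * M$k$ia) = cnj a * M$i$ia + cnj b * M$j$ia" for ia
    using sum2[OF ij, of "\<lambda>k x. cnj x * M$k$ia" a b] by simp
  have "trace (ket_bra (\<chi> k. if k = i then a else if k = j then b else 0) ** M)
     = (\<Sum>ia\<in>UNIV. (if ia = i then a else if ia = j then b else 0) * (cnj a * M$i$ia + cnj b * M$j$ia))"
    unfolding tr_ket by (simp only: vec_lambda_beta e)
  also have "\<dots> = a * (cnj a * M$i$i + cnj b * M$j$i) + b * (cnj a * M$i$j + cnj b * M$j$j)"
    using sum2[OF ij, of "\<lambda>ia x. x * (cnj a * M$i$ia + cnj b * M$j$ia)" a b] by simp
  finally show ?thesis by (simp add: algebra_simps)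
qed

lemma tr1:
  fixes M :: "complex^'h^'h"
  shows "trace (ket_bra (\<chi> k. if k = i then a else 0) ** M) = a*cnj a*M$i$i"
proof -
  have e: "(\<Sum>k\<in>UNIV. cnj (if k = i then a else 0) * M$k$ia) = cnj a * M$i$ia" for ia
    using sum1[of "\<lambda>k x. cnj x * M$k$ia" i a] by simp
  have "trace (ket_bra (\<chi> k. if k = i then a else 0) ** M)
     = (\<Sum>ia\<in>UNIV. (if ia = i then a else 0) * (cnj a * M$i$ia))"
    unfolding tr_ket by (simp only: vec_lambda_beta e)
  also have "\<dots> = a * (cnj a * M$i$i)"
    using sum1[of "\<lambda>ia x. x * (cnj a * M$i$ia)" i a] by simp
  finally show ?thesis by (simp add: algebra_simps)
qed

lemma polar:
  fixes M :: "complex^'h^'h"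
  assumes herm: "hermitian M" and const: "\<And>\<psi>. unit_vec \<psi> \<Longrightarrow> Re (trace (ket_bra \<psi> ** M)) = r"
  shows "M = mat (complex_of_real r)"
proof -
  have hm: "\<And>i j. M$j$i = cnj (M$i$j)" using herm unfolding hermitian_def by blast
  have diag: "Re (M$i$i) = r" for i
  proof -
    let ?\<psi> = "\<chi> k. if k = i then (1::complex) else 0"
    have u: "unit_vec ?\<psi>" unfolding unit_vec_def
      using sum1[of "\<lambda>k x. (cmod x)^2" i 1] by simp
    have "trace (ket_bra ?\<psi> ** M) = M$i$i" using tr1[of i 1 M] by simp
    with const[OF u] show ?thesis by simp
  qed
  have diag2: "M$i$i = complex_of_real r" for i
    using diag[of i] hm[of i i] by (simp add: complex_eq_iff)
  have off: "M$i$j = 0" if ij: "i \<noteq> j" for i j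
  proof -
    define s where "s = complex_of_real (1 / sqrt 2)"
    have s2: "s * cnj s = 1/2" "cmod s ^ 2 = 1/2" unfolding s_def
      by (simp_all add: power_divide complex_eq_iff norm_divide)
    have is2: "(\<i> * s) * cnj (\<i> * s) = 1/2" "cmod (\<i> * s) ^ 2 = 1/2" "s * cnj (\<i> * s) = - \<i> / 2"
       "(\<i> * s) * cnj s = \<i> / 2"
      unfolding s_def by (simp_all add: power_divide complex_eq_iff norm_mult norm_divide)
    have s3: "Im s = 0" "Re s * Re s = 1/2" unfolding s_def by (simp_all add: power_divide)
    let ?\<psi> = "\<chi> k. if k = i then s else if k = j then s else 0"
    have u: "unit_vec ?\<psi>" unfolding unit_vec_def
      using sum2[OF ij, of "\<lambda>k x. (cmod x)^2" s s] s2 by simp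
    have re: "Re (M$i$j) = 0" using const[OF u] tr2[OF ij, of s s M] s2 diag[of i] diag[of j] hm[of i j] by simp
    let ?\<phi> = "\<chi> k. if k = i then s else if k = j then \<i> * s else 0"
    have u2: "unit_vec ?\<phi>" unfolding unit_vec_def
      using sum2[OF ij, of "\<lambda>k x. (cmod x)^2" s "\<i> * s"] s2 is2 by simp
    have im: "Im (M$i$j) = 0" using const[OF u2] tr2[OF ij, of s "\<i> * s" M] s2 is2 s3 diag[of i] diag[of j] hm[of i j] by simp
    show ?thesis using re im by (simp add: complex_eq_iff)
  qed
  show ?thesis
    by (simp add: vec_eq_iff mat_def diag2 off)
qed

lemma Gp_iff:
  fixes \<iota> :: "'v::euclidean_space \<Rightarrow> complex^'h^'h"
  assumes "linear \<iota>"
  shows "\<Gamma> \<in> Gp \<iota> W v \<longleftrightarrow> \<Gamma> \<in> pure_states \<and> (\<forall>\<Gamma>'\<in>pure_states.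
     iota_star \<iota> \<Gamma> \<bullet> v + energy \<Gamma> W \<le> iota_star \<iota> \<Gamma>' \<bullet> v + energy \<Gamma>' W)"
  by (simp add: Gp_def pure_ground_states_def energy_split[OF assms])

lemma mono_rel:
  fixes \<iota> :: "'v::euclidean_space \<Rightarrow> complex^'h^'h"
  assumes "linear \<iota>" "\<rho>1 \<in> iota_star \<iota> ` Gp \<iota> W v1" "\<rho>2 \<in> iota_star \<iota> ` Gp \<iota> W v2"
  shows "(\<rho>1 - \<rho>2) \<bullet> (v1 - v2) \<le> 0"
proof -
  obtain G1 where G1: "G1 \<in> Gp \<iota> W v1" "\<rho>1 = iota_star \<iota> G1" using assms(2) by auto
  obtain G2 where G2: "G2 \<in> Gp \<iota> W v2" "\<rho>2 = iota_star \<iota> G2" using assms(3) by auto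
  have A1: "\<forall>G'\<in>pure_states. iota_star \<iota> G1 \<bullet> v1 + energy G1 W \<le> iota_star \<iota> G' \<bullet> v1 + energy G' W" "G1 \<in> pure_states"
    using G1(1) unfolding Gp_iff[OF assms(1)] by auto
  have A2: "\<forall>G'\<in>pure_states. iota_star \<iota> G2 \<bullet> v2 + energy G2 W \<le> iota_star \<iota> G' \<bullet> v2 + energy G' W" "G2 \<in> pure_states"
    using G2(1) unfolding Gp_iff[OF assms(1)] by auto
  have "\<rho>1 \<bullet> v1 + energy G1 W \<le> \<rho>2 \<bullet> v1 + energy G2 W"
    using A1 A2 G1(2) G2(2) by blast
  moreover have "\<rho>2 \<bullet> v2 + energy G2 W \<le> \<rho>1 \<bullet> v2 + energy G1 W"
    using A1 A2 G1(2) G2(2) by blast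
  ultimately show ?thesis by (simp add: inner_diff_left inner_diff_right)
qed

lemma lip_rel:
  fixes \<iota> :: "'v::euclidean_space \<Rightarrow> complex^'h^'h"
  assumes "linear \<iota>" "\<rho>1 \<in> iota_star \<iota> ` Gp \<iota> W v1" "\<rho>2 \<in> iota_star \<iota> ` Gp \<iota> W v2"
  shows "norm (\<rho>1 - \<rho>2) \<le> norm ((v1 - \<rho>1) - (v2 - \<rho>2))"
proof -
  have m: "(\<rho>1 - \<rho>2) \<bullet> (v1 - v2) \<le> 0" by (rule mono_rel[OF assms])
  have eq: "(v1 - \<rho>1) - (v2 - \<rho>2) = (v1 - v2) - (\<rho>1 - \<rho>2)" by (simp add: algebra_simps)
  have "(\<rho>1 - \<rho>2) \<bullet> (\<rho>1 - \<rho>2) \<le> ((v1 - v2) - (\<rho>1 - \<rho>2)) \<bullet> ((v1 - v2) - (\<rho>1 - \<rho>2))"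
    using m inner_ge_zero[of "v1 - v2"] by (simp add: inner_diff_left inner_diff_right inner_commute)
  then show ?thesis unfolding eq by (simp add: norm_le)
qed

lemma shift_rel:
  fixes \<iota> :: "'v::euclidean_space \<Rightarrow> complex^'h^'h"
  assumes "linear \<iota>" "\<Gamma> \<in> Gp \<iota> W v"
    and m: "\<forall>G1\<in>pure_states. \<forall>G2\<in>pure_states. iota_star \<iota> G1 \<bullet> m = iota_star \<iota> G2 \<bullet> m"
  shows "\<Gamma> \<in> Gp \<iota> W (v + m)"
proof -
  have A: "\<forall>G'\<in>pure_states. iota_star \<iota> \<Gamma> \<bullet> v + energy \<Gamma> W \<le> iota_star \<iota> G' \<bullet> v + energy G' W" "\<Gamma> \<in> pure_states"
    using assms(2) unfolding Gp_iff[OF assms(1)] by auto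
  have "\<forall>G'\<in>pure_states. iota_star \<iota> \<Gamma> \<bullet> (v + m) + energy \<Gamma> W \<le> iota_star \<iota> G' \<bullet> (v + m) + energy G' W"
  proof
    fix G' :: "complex^'h^'h" assume G': "G' \<in> pure_states"
    have "iota_star \<iota> \<Gamma> \<bullet> m = iota_star \<iota> G' \<bullet> m" using m G' A(2) by blast
    then show "iota_star \<iota> \<Gamma> \<bullet> (v + m) + energy \<Gamma> W \<le> iota_star \<iota> G' \<bullet> (v + m) + energy G' W"
      using A(1) G' by (simp add: inner_add_right)
  qed
  then show ?thesis using A(2) unfolding Gp_iff[OF assms(1)] by blast
qed

lemma seg_rel:
  fixes \<iota> :: "'v::euclidean_space \<Rightarrow> complex^'h^'h"
  assumes "linear \<iota>" "\<Gamma> \<in> Gp \<iota> W v1" "\<Gamma>' \<in> Gp \<iota> W v2" "iota_star \<iota> \<Gamma>' = iota_star \<iota> \<Gamma>"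
    and t: "0 \<le> t" "t \<le> 1"
  shows "\<Gamma> \<in> Gp \<iota> W (v1 + t *\<^sub>R (v2 - v1))"
proof -
  let ?e = "\<lambda>G v. iota_star \<iota> G \<bullet> v + energy G W"
  have P: "\<Gamma> \<in> pure_states" "\<Gamma>' \<in> pure_states" using assms(2,3) Gp_iff[OF assms(1)] by auto
  have h1: "\<forall>G\<in>pure_states. ?e \<Gamma> v1 \<le> ?e G v1" using assms(2) Gp_iff[OF assms(1)] by auto
  have h2: "\<forall>G\<in>pure_states. ?e \<Gamma>' v2 \<le> ?e G v2" using assms(3) Gp_iff[OF assms(1)] by auto
  have "?e \<Gamma> v2 \<le> ?e \<Gamma>' v2"
  proof -
    have "?e \<Gamma> v2 = ?e \<Gamma> v1 + iota_star \<iota> \<Gamma> \<bullet> (v2 - v1)" by (simp add: inner_diff_right)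
    also have "\<dots> \<le> ?e \<Gamma>' v1 + iota_star \<iota> \<Gamma> \<bullet> (v2 - v1)" using h1 P by auto
    also have "\<dots> = ?e \<Gamma>' v2" using assms(4) by (simp add: inner_diff_right)
    finally show ?thesis .
  qed
  then have h2': "\<forall>G\<in>pure_states. ?e \<Gamma> v2 \<le> ?e G v2" using h2 by force
  have lin: "?e G (v1 + t *\<^sub>R (v2 - v1)) = (1 - t) * ?e G v1 + t * ?e G v2" for G :: "complex^'h^'h"
    by (simp add: inner_add_right inner_diff_right algebra_simps)
  have "\<forall>G\<in>pure_states. ?e \<Gamma> (v1 + t *\<^sub>R (v2 - v1)) \<le> ?e G (v1 + t *\<^sub>R (v2 - v1))"
  proof
    fix G :: "complex^'h^'h" assume G: "G \<in> pure_states"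
    have a: "(1 - t) * ?e \<Gamma> v1 \<le> (1 - t) * ?e G v1" using h1 G t by (intro mult_left_mono) auto
    have b: "t * ?e \<Gamma> v2 \<le> t * ?e G v2" using h2' G t by (intro mult_left_mono) auto
    show "?e \<Gamma> (v1 + t *\<^sub>R (v2 - v1)) \<le> ?e G (v1 + t *\<^sub>R (v2 - v1))"
      unfolding lin using a b by linarith
  qed
  then show ?thesis using P Gp_iff[OF assms(1)] by blast
qed

lemma proj_exists:
  fixes N :: "'a::euclidean_space set"
  assumes "subspace N"
  obtains Q where "linear Q" "\<And>x. Q x \<in> N" "\<And>m. m \<in> N \<Longrightarrow> Q m = m"
    "\<And>x. x - Q x \<in> orthogonal_comp N"
proof -
  obtain B where "B \<subseteq> N"
    and ortho: "pairwise orthogonal B" "\<And>x. x \<in> B \<Longrightarrow> norm x = 1"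
    and "independent B" "card B = dim N" "span B = N"
    using orthonormal_basis_subspace [OF assms] by metis
  then have "finite B"
    by (simp add: indep_card_eq_dim_span)
  have *: "\<forall>x\<in>B. \<forall>y\<in>B. x \<bullet> y = (if x=y then 1 else 0)"
    using ortho norm_eq_1 by (auto simp: orthogonal_def pairwise_def)
  define Q where "Q v = (\<Sum>b\<in>B. (v \<bullet> b) *\<^sub>R b)" for v
  have lin: "linear Q"
    by (rule linearI) (simp_all add: Q_def inner_add_left scaleR_add_left sum.distrib scaleR_sum_right)
  have QN: "Q v \<in> N" for v
    unfolding Q_def
    by (metis (no_types, lifting) \<open>span B = N\<close> assms subspace_sum span_base span_mul)
  have perp: "v - Q v \<in> orthogonal_comp N" for v
    unfolding orthogonal_comp_def orthogonal_def mem_Collect_eq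
  proof 
    fix y
    assume "y \<in> N"
    with \<open>span B = N\<close> span_finite [OF \<open>finite B\<close>]
    obtain u where u: "y = (\<Sum>b\<in>B. u b *\<^sub>R b)"
      by auto
    have "b \<bullet> (v - Q v) = 0" if "b \<in> B" for b
      using that \<open>finite B\<close> unfolding Q_def
      by (simp add: * algebra_simps inner_sum_right if_distrib [of "(*)v" for v] inner_commute cong: if_cong)
    then show "y \<bullet> (v - Q v) = 0"
      by (simp add: u inner_sum_left)
  qed
  have id: "Q m = m" if "m \<in> N" for m
  proof -
    have "m - Q m \<in> N" using that QN assms by (simp add: subspace_diff)
    moreover have "m - Q m \<in> orthogonal_comp N" by (rule perp)
    ultimately have "m - Q m = 0" using orthogonal_Int_0[OF assms] by blast
    then show ?thesis by simp
  qed
  show ?thesis using that lin QN id perp by blast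
qed

lemma unit_e: "unit_vec ((\<chi> k. if k = i then (1::complex) else 0) :: complex^'h)"
  unfolding unit_vec_def using sum1[of "\<lambda>k x. (cmod x)^2" i 1] by simp

theorem corollary2p21:
  fixes \<iota> :: "'v::euclidean_space \<Rightarrow> complex^'h^'h" and W :: "complex^'h^'h"
  assumes "gen_functional_theory \<iota> W"
  shows "aff_null (affine hull (iota_star \<iota> ` pure_states))
           {\<rho>. pure_v_rep \<iota> W \<rho> \<and> \<not> uniquely_v_rep \<iota> W \<rho>}"
proof -
  have lin: "linear \<iota>" and herm: "\<And>v. hermitian (\<iota> v)"
    using assms unfolding gen_functional_theory_def by auto
  define A where "A = affine hull (iota_star \<iota> ` pure_states)"
  define S where "S = {\<rho>. pure_v_rep \<iota> W \<rho> \<and> \<not> uniquely_v_rep \<iota> W \<rho>}"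
  define N where "N = orthogonal_comp {a - b | a b. a \<in> A \<and> b \<in> A}"
  have Gp_pure: "\<Gamma> \<in> Gp \<iota> W v \<Longrightarrow> \<Gamma> \<in> pure_states" for \<Gamma> v
    by (simp add: Gp_def pure_ground_states_def)
  have SA: "S \<subseteq> A"
  proof
    fix \<rho> assume "\<rho> \<in> S"
    then obtain v where "\<rho> \<in> iota_star \<iota> ` Gp \<iota> W v" unfolding S_def pure_v_rep_def by auto
    then obtain \<Gamma> where "\<Gamma> \<in> Gp \<iota> W v" "\<rho> = iota_star \<iota> \<Gamma>" by auto
    then show "\<rho> \<in> A" unfolding A_def using Gp_pure by (auto intro: hull_inc)
  qed
  have subN: "subspace N" unfolding N_def by (rule subspace_orthogonal_comp)
  have Nm: "\<forall>G1\<in>pure_states. \<forall>G2\<in>pure_states. iota_star \<iota> G1 \<bullet> m = iota_star \<iota> G2 \<bullet> m"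
    if "m \<in> N" for m
  proof (intro ballI)
    fix G1 G2 :: "complex^'h^'h" assume "G1 \<in> pure_states" "G2 \<in> pure_states"
    then have "iota_star \<iota> G1 - iota_star \<iota> G2 \<in> {a - b | a b. a \<in> A \<and> b \<in> A}"
      unfolding A_def by (blast intro: hull_inc)
    then have "(iota_star \<iota> G1 - iota_star \<iota> G2) \<bullet> m = 0"
      using that unfolding N_def orthogonal_comp_def orthogonal_def by blast
    then show "iota_star \<iota> G1 \<bullet> m = iota_star \<iota> G2 \<bullet> m" by (simp add: inner_diff_left)
  qed
  have Nsc: "\<exists>c. \<iota> m = mat c" if "m \<in> N" for m
  proof -
    define e :: "complex^'h" where "e = (\<chi> k. if k = undefined then 1 else 0)"
    have ue: "unit_vec e" unfolding e_def by (rule unit_e)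
    have "\<iota> m = mat (complex_of_real (Re (trace (ket_bra e ** \<iota> m))))"
    proof (rule polar[OF herm])
      fix \<psi> :: "complex^'h" assume "unit_vec \<psi>"
      then have "ket_bra \<psi> \<in> pure_states" "ket_bra e \<in> pure_states"
        using ue unfolding pure_states_def by auto
      then show "Re (trace (ket_bra \<psi> ** \<iota> m)) = Re (trace (ket_bra e ** \<iota> m))"
      proof -
        have "iota_star \<iota> (ket_bra \<psi>) \<bullet> m = iota_star \<iota> (ket_bra e) \<bullet> m"
          using Nm[OF that] \<open>ket_bra \<psi> \<in> pure_states\<close> \<open>ket_bra e \<in> pure_states\<close> by blast
        then show ?thesis by (simp only: iota_star_inner[OF lin])
      qed
    qed
    then show ?thesis by blast
  qed
  obtain Q where Qlin: "linear Q" and QN: "\<And>x. Q x \<in> N" and Qid: "\<And>m. m \<in> N \<Longrightarrow> Q m = m"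
    and Qperp: "\<And>x. x - Q x \<in> orthogonal_comp N"
    using proj_exists[OF subN] by blast
  obtain B where QB: "\<And>x. norm (Q x) \<le> B * norm x" using linear_bounded[OF Qlin] by blast
  have perp0: "m \<bullet> (x - Q x) = 0" if "m \<in> N" for m x
    using Qperp[of x] that unfolding orthogonal_comp_def orthogonal_def by blast
  define R where "R v \<rho> \<longleftrightarrow> \<rho> \<in> iota_star \<iota> ` Gp \<iota> W v" for v \<rho>
  define Z where "Z = {v - \<rho> | v \<rho>. R v \<rho>}"
  define \<phi> where "\<phi> z = (SOME \<rho>. \<exists>v. R v \<rho> \<and> z = v - \<rho>)" for z
  have \<phi>Z: "\<exists>v. R v (\<phi> z) \<and> z = v - \<phi> z" if "z \<in> Z" for z
  proof -
    have "\<exists>\<rho> v. R v \<rho> \<and> z = v - \<rho>" using that unfolding Z_def by blast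
    then show ?thesis unfolding \<phi>_def by (rule someI_ex)
  qed
  have \<phi>eq: "\<phi> (v - \<rho>) = \<rho>" if "R v \<rho>" for v \<rho>
  proof -
    have "v - \<rho> \<in> Z" using that unfolding Z_def by blast
    then obtain v' where v': "R v' (\<phi> (v - \<rho>))" "v - \<rho> = v' - \<phi> (v - \<rho>)" using \<phi>Z by blast
    have "norm (\<phi> (v - \<rho>) - \<rho>) \<le> norm ((v' - \<phi> (v - \<rho>)) - (v - \<rho>))"
      using lip_rel[OF lin] v'(1) that unfolding R_def by blast
    then show ?thesis using v'(2) by simp
  qed
  define \<Psi> where "\<Psi> z = \<phi> z + Q z" for z
  have lip\<Psi>: "norm (\<Psi> z1 - \<Psi> z2) \<le> (1 + B) * norm (z1 - z2)" if zz: "z1 \<in> Z" "z2 \<in> Z" for z1 z2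
  proof -
    obtain v1 where v1: "R v1 (\<phi> z1)" "z1 = v1 - \<phi> z1" using \<phi>Z zz by blast
    obtain v2 where v2: "R v2 (\<phi> z2)" "z2 = v2 - \<phi> z2" using \<phi>Z zz by blast
    have a: "norm (\<phi> z1 - \<phi> z2) \<le> norm (z1 - z2)"
      using lip_rel[OF lin] v1 v2 unfolding R_def by metis
    have b: "norm (Q z1 - Q z2) \<le> B * norm (z1 - z2)"
      using QB[of "z1 - z2"] by (simp add: linear_diff[OF Qlin])
    have "norm (\<Psi> z1 - \<Psi> z2) \<le> norm (\<phi> z1 - \<phi> z2) + norm (Q z1 - Q z2)"
      unfolding \<Psi>_def by (metis (no_types, lifting) add_diff_add norm_triangle_ineq)
    then show ?thesis using a b by (simp add: algebra_simps)
  qed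
  define I where "I = Sigma {b \<in> Basis. b - Q b \<noteq> 0} (\<lambda>_. \<rat> :: real set)"
  define F where "F = (\<lambda>(b,q). \<Psi> ` (Z \<inter> {z. (b - Q b) \<bullet> z = q})) ` I"
  have cF: "countable F" unfolding F_def I_def
    by (intro countable_image countable_SIGMA countable_rat countable_finite) auto
  have nF: "negligible X" if XF: "X \<in> F" for X
  proof -
    obtain b q where bq: "(b, q) \<in> I" "X = \<Psi> ` (Z \<inter> {z. (b - Q b) \<bullet> z = q})"
      using XF unfolding F_def by auto
    have "negligible (Z \<inter> {z. (b - Q b) \<bullet> z = q})"
      using bq(1) unfolding I_def
      by (intro negligible_subset[OF negligible_hyperplane[of "b - Q b" q]]) auto
    then show ?thesis unfolding bq(2)
    proof (rule negligible_locally_Lipschitz_image[OF order_refl])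
      fix x assume x: "x \<in> Z \<inter> {z. (b - Q b) \<bullet> z = q}"
      show "\<exists>T B. open T \<and> x \<in> T \<and> (\<forall>y \<in> (Z \<inter> {z. (b - Q b) \<bullet> z = q}) \<inter> T. norm(\<Psi> y - \<Psi> x) \<le> B * norm(y - x))"
        using x lip\<Psi> by (intro exI[of _ UNIV] exI[of _ "1 + B"]) auto
    qed
  qed
  have cover: "{x + y | x y. x \<in> S \<and> y \<in> N} \<subseteq> \<Union>F"
  proof
    fix x assume "x \<in> {x + y | x y. x \<in> S \<and> y \<in> N}"
    then obtain \<rho> y where x: "x = \<rho> + y" and \<rho>S: "\<rho> \<in> S" and yN: "y \<in> N" by blast
    obtain v1 where "\<rho> \<in> iota_star \<iota> ` Gp \<iota> W v1" using \<rho>S unfolding S_def pure_v_rep_def by auto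
    then obtain \<Gamma> where \<Gamma>: "\<Gamma> \<in> Gp \<iota> W v1" "\<rho> = iota_star \<iota> \<Gamma>" by auto
    have "\<not> uniquely_v_rep \<iota> W \<rho>" using \<rho>S unfolding S_def by auto
    then obtain v2 where v2: "\<rho> \<in> iota_star \<iota> ` Gp \<iota> W v2" "\<not> (\<exists>c. \<iota> v2 - \<iota> v1 = mat c)"
      unfolding uniquely_v_rep_def using \<open>\<rho> \<in> iota_star \<iota> ` Gp \<iota> W v1\<close> by blast
    then obtain \<Gamma>' where \<Gamma>': "\<Gamma>' \<in> Gp \<iota> W v2" "\<rho> = iota_star \<iota> \<Gamma>'" by auto
    define u where "u = v2 - v1"
    have uN: "u \<notin> N"
    proof
      assume "u \<in> N"
      then obtain c where "\<iota> u = mat c" using Nsc by blast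
      then show False using v2(2) by (auto simp: u_def linear_diff[OF lin])
    qed
    obtain b where b: "b \<in> Basis" "(b - Q b) \<bullet> u \<noteq> 0"
    proof (rule ccontr)
      assume "\<not> thesis"
      then have h: "\<forall>b\<in>Basis. (b - Q b) \<bullet> u = 0" using that by blast
      have "(u - Q u) \<bullet> b = 0" if "b \<in> Basis" for b
      proof -
        have 1: "Q b \<bullet> (u - Q u) = 0" using perp0[OF QN] .
        have 2: "Q u \<bullet> (b - Q b) = 0" using perp0[OF QN] .
        have 3: "(b - Q b) \<bullet> (u - Q u) = 0" using h that 2
          by (simp add: inner_diff_right inner_commute)
        have "b \<bullet> (u - Q u) = (b - Q b) \<bullet> (u - Q u) + Q b \<bullet> (u - Q u)"
          by (simp add: inner_diff_left)
        then show ?thesis using 1 3 by (simp add: inner_commute)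
      qed
      then have "u - Q u = 0" using euclidean_all_zero_iff[of "u - Q u"] by blast
      then have "u = Q u" by simp
      then show False using uN QN[of u] by simp
    qed
    define a where "a = b - Q b"
    define \<delta> where "\<delta> = a \<bullet> u"
    define \<alpha> where "\<alpha> = a \<bullet> (v1 - \<rho>)"
    have \<delta>: "\<delta> \<noteq> 0" using b(2) unfolding \<delta>_def a_def .
    obtain q t where q: "q \<in> \<rat>" and t: "0 \<le> t" "t \<le> 1" and qt: "\<alpha> + t * \<delta> = q"
    proof (cases "\<delta> > 0")
      case True
      then obtain q where q: "q \<in> \<rat>" "\<alpha> < q" "q < \<alpha> + \<delta>" using Rats_dense_in_real[of \<alpha> "\<alpha> + \<delta>"] by auto
      show ?thesis
        by (rule that[OF q(1), of "(q - \<alpha>) / \<delta>"]) (use True q in \<open>auto simp: field_simps\<close>)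
    next
      case False
      then have neg: "\<delta> < 0" using \<delta> by auto
      then obtain q where q: "q \<in> \<rat>" "\<alpha> + \<delta> < q" "q < \<alpha>" using Rats_dense_in_real[of "\<alpha> + \<delta>" \<alpha>] by auto
      show ?thesis
        by (rule that[OF q(1), of "(q - \<alpha>) / \<delta>"]) (use neg q in \<open>auto simp: field_simps\<close>)
    qed
    define vt where "vt = v1 + t *\<^sub>R u"
    have \<Gamma>t: "\<Gamma> \<in> Gp \<iota> W vt" unfolding vt_def u_def
      using seg_rel[OF lin \<Gamma>(1) \<Gamma>'(1) _ t] \<Gamma>(2) \<Gamma>'(2) by simp
    define m' where "m' = y - Q (vt - \<rho>)"
    have m'N: "m' \<in> N" unfolding m'_def using subN yN QN by (simp add: subspace_diff)
    have "\<Gamma> \<in> Gp \<iota> W (vt + m')" by (rule shift_rel[OF lin \<Gamma>t Nm[OF m'N]])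
    then have Rz: "R (vt + m') \<rho>" unfolding R_def using \<Gamma>(2) by blast
    define z where "z = vt + m' - \<rho>"
    have zZ: "z \<in> Z" unfolding Z_def z_def using Rz by blast
    have \<phi>z: "\<phi> z = \<rho>" unfolding z_def by (rule \<phi>eq[OF Rz])
    have "z = (vt - \<rho>) + m'" unfolding z_def by (simp add: algebra_simps)
    then have "Q z = Q (vt - \<rho>) + m'" using Qid[OF m'N] by (simp add: linear_add[OF Qlin])
    then have Qz: "Q z = y" unfolding m'_def by simp
    have \<Psi>z: "\<Psi> z = x" unfolding \<Psi>_def \<phi>z Qz x ..
    have am: "a \<bullet> m' = 0" using perp0[OF m'N, of b] unfolding a_def by (simp add: inner_commute)
    have "a \<bullet> z = a \<bullet> (v1 - \<rho>) + t * (a \<bullet> u) + a \<bullet> m'"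
      unfolding z_def vt_def by (simp add: inner_diff_right inner_add_right)
    then have az: "a \<bullet> z = q" using am qt unfolding \<alpha>_def \<delta>_def by simp
    have "(b, q) \<in> I" unfolding I_def using b \<delta> q unfolding \<delta>_def a_def by auto
    moreover have "x \<in> \<Psi> ` (Z \<inter> {z. (b - Q b) \<bullet> z = q})"
      using zZ az \<Psi>z unfolding a_def by blast
    ultimately show "x \<in> \<Union>F" unfolding F_def by blast
  qed
  have "negligible {x + y | x y. x \<in> S \<and> y \<in> N}"
    by (rule negligible_subset[OF negligible_countable_Union[OF cF nF] cover]) 
  then show ?thesis
    using SA unfolding aff_null_def A_def[symmetric] S_def[symmetric] N_def[symmetric]
    by (simp add: negligible_iff_null_sets)
qed

end
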